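(* For all integers $m\ge 0$ and $n\ge 1$, $$\int_0^{\pi/2}x^{2m}\cos^{2n-1}(x)\,dx=\frac{(2m)!}{2}\,\frac{4^n}{n\binom{2n}{n}}\sum_{j=0}^m\frac{(-1)^j\,t_n^{\star}(\{2\}_j)}{(2m-2j)!}\left(\frac{\pi}{2}\right)^{2m-2j}.$$
   Context: For integers $n\ge 1$ and $j\ge 0$, the multiple $t$-harmonic star sum is $$t_n^{\star}(\{2\}_j)=\sum_{n\ge k_1\ge\dots\ge k_j\ge 1}\prod_{i=1}^j\frac{1}{(2k_i-1)^2},$$ with $t_n^{\star}(\{2\}_0)=1$; equivalently $t_n^{\star}(\{2\}_j)=\sum_{k=1}^n \frac{t_k^{\star}(\{2\}_{j-1})}{(2k-1)^2}$ for $j\ge1$. *)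

theory Defs
  imports "HOL-Analysis.Analysis"
begin

text \<open>Multiple t-harmonic star sum  t_n^star({2}_j), via the recursion
  t_n^star({2}_0) = 1 and t_n^star({2}_j) = sum_{k=1}^n t_k^star({2}_{j-1}) / (2k-1)^2.\<close>
fun tstar2 :: "nat \<Rightarrow> nat \<Rightarrow> real" where
  "tstar2 n 0 = 1"
| "tstar2 n (Suc j) = (\<Sum>k=1..n. tstar2 k j / (2 * real k - 1)^2)"

end

theory Submission
  imports Defs
begin
lemma ftc:
  assumes "\<And>x. (G has_real_derivative h x) (at x)"
  shows "(h has_integral (G (pi/2) - G 0)) {0..pi/2}"
  apply (rule fundamental_theorem_of_calculus)
  using assms by (auto simp: has_real_derivative_iff_has_vector_derivative intro: has_vector_derivative_at_within)

lemma algA: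
  fixes S C M R A B D K Q :: real
  assumes "S*S = 1 - C*C" "R*M = M*(2*M-1)"
  shows "2 * M * A *
     ((- Q - 2) * (C * K) * S) +
     (C * ((- Q - 2) * (C * K)) -
      (1 + Q) * (S * K) * (- Q - 2) * S) * B -
     (R * D * (2 * M) * (C * (C * K)) -
      (2 + Q) * (S * (C * K)) * (2 * M * A)) =
     B * ((Q + 2) * (Q + 1) * K -
      (Q + 2)^2 * (C * (C * K))) -
     2 * M * (2 * M - 1) * D * (C * (C * K))"
  using assms by algebra

lemma derivA:
  fixes x :: real
  shows "((\<lambda>x. x^(2*m) * (-(real q+2) * cos x^(q+1) * sin x) - 2*real m * x^(2*m-1) * cos x^(q+2))
     has_real_derivative
     (x^(2*m) * ((real q+2)*(real q+1) * cos x^q - (real q+2)^2 * cos x^(q+2))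
      - 2*real m*(2*real m - 1) * x^(2*m-2) * cos x^(q+2))) (at x)"
proof -
  have s: "sin x ^ 2 = 1 - cos x ^ 2" by (simp add: sin_squared_eq)
  have t: "real (2*m - Suc 0) * real m = real m * (2*real m - 1)"
    by (cases m) auto
  have u: "(2*m - 2) = 2*m - Suc (Suc 0)" by simp
  show ?thesis
    apply (rule derivative_eq_intros refl | simp)+
    apply (simp only: u)
    apply (rule algA)
    using s t unfolding power2_eq_square by auto
qed


lemma derivB:
  fixes x :: real
  shows "((\<lambda>x. x^(2*m) * sin x + 2*real m * x^(2*m-1) * cos x)
     has_real_derivative
     (x^(2*m) * cos x + 2*real m*(2*real m - 1) * x^(2*m-2) * cos x)) (at x)"
proof -
  have t: "real (2*m - Suc 0) * real m = real m * (2*real m - 1)"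
    by (cases m) auto
  have u: "(2*m - 2) = 2*m - Suc (Suc 0)" by simp
  show ?thesis
    apply (rule derivative_eq_intros refl | simp)+
    apply (simp only: u)
    by (cases m) auto
qed

definition Iq :: "nat \<Rightarrow> nat \<Rightarrow> real" where
  "Iq m q = integral {0..pi/2} (\<lambda>x. x^(2*m) * cos x ^ q)"

lemma hasI: "((\<lambda>x. x^(2*m) * cos x ^ q) has_integral Iq m q) {0..pi/2}"
  unfolding Iq_def
  by (intro integrable_integral integrable_continuous_interval continuous_intros)

lemma relA:
  "(real q+2)*(real q+1) * Iq m q - (real q+2)^2 * Iq m (q+2)
    - 2*real m*(2*real m - 1) * Iq (m-1) (q+2) = 0"
proof -
  have H: "((\<lambda>x. x^(2*m) * ((real q+2)*(real q+1) * cos x^q - (real q+2)^2 * cos x^(q+2))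
      - 2*real m*(2*real m - 1) * x^(2*m-2) * cos x^(q+2)) has_integral 0) {0..pi/2}"
    using ftc[OF derivA, of m q] by (cases m) simp_all
  have C: "((\<lambda>x. (real q+2)*(real q+1) * (x^(2*m) * cos x ^ q) - (real q+2)^2 * (x^(2*m) * cos x ^ (q+2))
    - 2*real m*(2*real m - 1) * (x^(2*(m-1)) * cos x ^ (q+2))) has_integral
    ((real q+2)*(real q+1) * Iq m q - (real q+2)^2 * Iq m (q+2)
    - 2*real m*(2*real m - 1) * Iq (m-1) (q+2))) {0..pi/2}"
    by (intro has_integral_diff has_integral_mult_right hasI)
  have e: "2*(m-1) = 2*m-2" by simp
  show ?thesis
    apply (rule has_integral_unique[OF C])
    using H unfolding e by (simp add: algebra_simps)
qed

lemma relB: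
  "Iq m 1 + 2*real m*(2*real m - 1) * Iq (m-1) 1 = (pi/2)^(2*m)"
proof -
  have H: "((\<lambda>x. x^(2*m) * cos x + 2*real m*(2*real m - 1) * x^(2*m-2) * cos x)
     has_integral (pi/2)^(2*m)) {0..pi/2}"
    using ftc[OF derivB, of m] by (cases m) simp_all
  have C: "((\<lambda>x. (x^(2*m) * cos x ^ 1) + 2*real m*(2*real m - 1) * (x^(2*(m-1)) * cos x ^ 1)) has_integral
    (Iq m 1 + 2*real m*(2*real m - 1) * Iq (m-1) 1)) {0..pi/2}"
    by (intro has_integral_add has_integral_mult_right hasI)
  have e: "2*(m-1) = 2*m-2" by simp
  show ?thesis
    apply (rule has_integral_unique[OF C])
    using H unfolding e by (simp add: algebra_simps)
qed


lemma t1: "tstar2 1 j = 1"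
  by (induction j) simp_all

lemma tS: "tstar2 (Suc n) (Suc j) = tstar2 n (Suc j) + tstar2 (Suc n) j / (2*real n + 1)^2"
  by (simp add: algebra_simps)

definition Cn :: "nat \<Rightarrow> real" where
  "Cn n = 4 ^ n / (real n * real (2*n choose n))"

definition Sm :: "nat \<Rightarrow> nat \<Rightarrow> real" where
  "Sm m n = (\<Sum>j=0..m. (-1) ^ j * tstar2 n j / fact (2*m - 2*j) * (pi/2) ^ (2*m - 2*j))"

lemma Sm0: "Sm 0 n = 1" by (simp add: Sm_def)

lemma Sm_shift: "Sm (Suc m) n = (pi/2)^(2*Suc m)/fact(2*Suc m)
   - (\<Sum>j=0..m. (-1) ^ j * tstar2 n (Suc j) / fact (2*m - 2*j) * (pi/2) ^ (2*m - 2*j))"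
proof -
  have "Sm (Suc m) n = (-1)^0 * tstar2 n 0 / fact (2*Suc m - 2*0) * (pi/2)^(2*Suc m - 2*0)
     + (\<Sum>j=0..m. (-1) ^ Suc j * tstar2 n (Suc j) / fact (2*Suc m - 2*Suc j) * (pi/2) ^ (2*Suc m - 2*Suc j))"
    unfolding Sm_def by (subst sum.atLeast0_atMost_Suc_shift) (simp only: comp_def)
  also have "(\<Sum>j=0..m. (-1) ^ Suc j * tstar2 n (Suc j) / fact (2*Suc m - 2*Suc j) * (pi/2) ^ (2*Suc m - 2*Suc j))
     = - (\<Sum>j=0..m. (-1) ^ j * tstar2 n (Suc j) / fact (2*m - 2*j) * (pi/2) ^ (2*m - 2*j))"
    unfolding sum_negf[symmetric] by (intro sum.cong refl) simp
  finally show ?thesis by simp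
qed

lemma SmB: "Sm (Suc m) 1 = (pi/2)^(2*Suc m)/fact(2*Suc m) - Sm m 1"
  unfolding Sm_shift by (simp add: Sm_def t1)

lemma SmA: "Sm (Suc m) (Suc (Suc n)) = Sm (Suc m) (Suc n) - Sm m (Suc (Suc n)) / (2*real n + 3)^2"
proof -
  have "Sm (Suc m) (Suc (Suc n)) = (pi/2)^(2*Suc m)/fact(2*Suc m)
   - (\<Sum>j=0..m. (-1) ^ j * tstar2 (Suc n) (Suc j) / fact (2*m - 2*j) * (pi/2) ^ (2*m - 2*j)
       + (-1) ^ j * tstar2 (Suc (Suc n)) j / fact (2*m - 2*j) * (pi/2) ^ (2*m - 2*j) / (2*real n + 3)^2)"
    unfolding Sm_shift
    by (intro arg_cong2[where f="(-)"] refl sum.cong) (simp_all add: tS[of "Suc n"] algebra_simps add_divide_distrib)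
  also have "\<dots> = Sm (Suc m) (Suc n) - Sm m (Suc (Suc n)) / (2*real n + 3)^2"
    unfolding Sm_shift[of m "Suc n"] sum.distrib by (simp add: Sm_def sum_divide_distrib)
  finally show ?thesis .
qed

lemma fr: "(B::real) \<noteq> 0 \<Longrightarrow> D \<noteq> 0 \<Longrightarrow> A*D = C*B \<Longrightarrow> A/B = C/D"
  by (simp add: frac_eq_eq)

lemma C1: "Cn (Suc (Suc n)) * (2*real n+3) = Cn (Suc n) * (2*real n+2)"
proof -
  define F where "F = (fact (2*Suc n) :: real)"
  define G where "G = (fact (Suc n) :: real)"
  have fp: "F > 0" "G > 0" unfolding F_def G_def by simp_all
  have a: "real (2*Suc (Suc n) choose Suc (Suc n)) = fact (2*Suc (Suc n)) / (fact (Suc (Suc n)))^2"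
    by (subst binomial_fact) (simp_all add: power2_eq_square)
  have b: "real (2*Suc n choose Suc n) = F / G^2"
    unfolding F_def G_def by (subst binomial_fact) (simp_all add: power2_eq_square)
  have c: "(fact (2*Suc (Suc n)) :: real) = (2*real n+4)*(2*real n+3)*F"
    unfolding F_def by (simp add: algebra_simps)
  have f: "(fact (Suc (Suc n)) :: real) = (real n + 2) * G" unfolding G_def by simp
  have nz: "2*real n+3 \<noteq> 0" "real n + 2 \<noteq> 0" "real n + 1 \<noteq> 0" "2*real n+4 \<noteq> 0" by linarith+
  have d: "Cn (Suc n) = 4^(Suc n) * G^2 / ((real n+1) * F)"
    unfolding Cn_def b using fp nz by (simp add: field_simps)
  have e: "Cn (Suc (Suc n)) = 2*4^(Suc n) * G^2 / ((2*real n+3) * F)"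
  proof -
    have "Cn (Suc (Suc n)) = 4 * 4^(Suc n) / ((real n + 2) * ((2*real n+4)*(2*real n+3)*F / ((real n + 2) * G)^2))"
      unfolding Cn_def a c f by simp
    also have "\<dots> = 4 * 4^(Suc n) * ((real n + 2) * G)^2 / ((real n + 2) * ((2*real n+4)*(2*real n+3)*F))"
      using fp nz by (simp add: divide_simps)
    also have "\<dots> = 2*4^(Suc n) * G^2 / ((2*real n+3) * F)"
      apply (rule fr)
      using fp nz apply simp
      using fp nz apply simp
      by (simp add: power2_eq_square algebra_simps)
    finally show ?thesis .
  qed
  have l: "Cn (Suc (Suc n)) * (2*real n+3) = 2*4^(Suc n)*G^2/F"
    unfolding e using nz(1) by simp
  have r: "Cn (Suc n) * (2*real n+2) = 2*4^(Suc n)*G^2/F"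
  proof -
    have "Cn (Suc n) * (2*real n+2) = (4^(Suc n) * G^2 / ((real n+1) * F)) * (real n + 1) * 2"
      unfolding d by (simp add: algebra_simps)
    also have "\<dots> = 2*4^(Suc n)*G^2/F" using nz(3) by simp
    finally show ?thesis .
  qed
  show ?thesis using l r by simp
qed

lemma Cn1: "Cn 1 = 2" by (simp add: Cn_def)
lemma Cn1': "Cn (Suc 0) = 2" by (simp add: Cn_def)

lemma factS: "(fact (2*Suc m) :: real) = (2*real m+2)*(2*real m+1)*fact(2*m)"
  by (simp add: algebra_simps)


definition Fm :: "nat \<Rightarrow> nat \<Rightarrow> real" where
  "Fm m n = fact (2*m) / 2 * Cn n * Sm m n"

lemma gen1: "(f::real) \<noteq> 0 \<Longrightarrow> a - f*S = f*(a/f - S)"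
  by (simp add: right_diff_distrib)

lemma baseN: "Iq m 1 = Fm m 1"
proof (induction m)
  case 0
  show ?case using relB[of 0] by (simp add: Fm_def Cn1' Sm0)
next
  case (Suc m)
  have "Iq (Suc m) 1 = (pi/2)^(2*Suc m) - (2*real m+2)*(2*real m+1) * (fact(2*m)*Sm m 1)"
    using relB[of "Suc m"] Suc.IH by (simp add: Fm_def Cn1' algebra_simps)
  also have "\<dots> = (pi/2)^(2*Suc m) - fact (2*Suc m) * Sm m 1"
    unfolding factS by (simp add: algebra_simps)
  also have "\<dots> = fact (2*Suc m) * ((pi/2)^(2*Suc m) / fact (2*Suc m) - Sm m 1)"
    by (rule gen1) simp
  also have "\<dots> = Fm (Suc m) 1"
    unfolding Fm_def Cn1 SmB by simp
  finally show ?case .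
qed

lemma algS:
  fixes p q c1 c2 fs f0 r A B X :: real
  assumes "p \<noteq> 0" "c1*q = c2*p" "fs = r*f0"
    "p*q*(fs/2*c1*A) - p^2*X - r*(f0/2*c2*B) = 0"
  shows "X = fs/2*c2*(A - B/p^2)"
proof -
  have h: "p^2 * (B/p^2) = B" using assms(1) by simp
  have e1: "p^2 * (fs/2*c2*(A - B/p^2)) = fs/2*c2*(p^2*A - p^2*(B/p^2))"
    by (simp add: algebra_simps)
  note e1 = e1[unfolded h]
  have e2: "p^2 * X = fs/2*c2*(p^2*A - B)"
  proof -
    have "p^2 * X = p*(fs/2)*(c1*q)*A - (r*f0)/2*c2*B" using assms(4) by (simp add: algebra_simps)
    also have "\<dots> = fs/2*c2*(p^2*A - B)" unfolding assms(2) assms(3)[symmetric]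
      by (simp add: algebra_simps power2_eq_square)
    finally show ?thesis .
  qed
  have "p^2 * X = p^2 * (fs/2*c2*(A - B/p^2))" by (rule trans[OF e2 e1[symmetric]])
  then show ?thesis using assms(1) by simp
qed

lemma alg0:
  fixes p q c1 c2 X Y :: real
  assumes "p \<noteq> 0" "c1*q = c2*p" "p*q*Y - p^2*X = 0" "Y = c1/2"
  shows "X = c2/2"
proof -
  have "p^2*X = p*(c1*q)/2" using assms(3,4) by (simp add: algebra_simps)
  also have "\<dots> = p^2*(c2/2)" unfolding assms(2) by (simp add: power2_eq_square)
  finally show ?thesis using assms(1) by simp
qed

lemma stepN:
  assumes IH: "\<And>m. Iq m (2*n+1) = Fm m (Suc n)"
  shows "Iq m (2*Suc n+1) = Fm m (Suc (Suc n))"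
proof -
  have eq: "2*n+1+2 = 2*Suc n+1" by simp
  have R: "(2*real n+3)*(2*real n+2)*Iq m (2*n+1) - (2*real n+3)^2 * Iq m (2*Suc n+1)
     - 2*real m*(2*real m-1)*Iq (m-1) (2*Suc n+1) = 0" for m
    using relA[of "2*n+1" m] unfolding eq by (simp add: algebra_simps)
  have p: "2*real n+3 \<noteq> 0" by linarith
  show ?thesis
  proof (induction m)
    case 0
    have R0: "(2*real n+3)*(2*real n+2)*Iq 0 (2*n+1) - (2*real n+3)^2 * Iq 0 (2*Suc n+1) = 0"
      using R[of 0] by simp
    have Y: "Iq 0 (2*n+1) = Cn (Suc n)/2" using IH[of 0] by (simp add: Fm_def Sm0)
    have "Iq 0 (2*Suc n+1) = Cn (Suc (Suc n))/2"
      by (rule alg0[OF p C1[symmetric] R0 Y])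
    then show ?case by (simp add: Fm_def Sm0)
  next
    case (Suc m)
    have "Iq (Suc m) (2*Suc n+1) = fact (2*Suc m)/2*Cn (Suc (Suc n))*(Sm (Suc m) (Suc n) - Sm m (Suc (Suc n))/(2*real n+3)^2)"
    proof (rule algS[OF p C1[symmetric] factS])
      have I1: "Iq (Suc m) (2*n+1) = fact (2*Suc m)/2*Cn (Suc n)*Sm (Suc m) (Suc n)"
        using IH[of "Suc m"] by (simp add: Fm_def)
      have I2: "Iq m (2*Suc n+1) = fact (2*m)/2*Cn (Suc (Suc n))*Sm m (Suc (Suc n))"
        using Suc.IH by (simp add: Fm_def)
      have rr: "2*real (Suc m)*(2*real (Suc m)-1) = (2*real m+2)*(2*real m+1)"
        by (simp add: algebra_simps)
      have R1: "(2*real n+3)*(2*real n+2)*Iq (Suc m) (2*n+1) - (2*real n+3)^2 * Iq (Suc m) (2*Suc n+1)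
        - 2*real (Suc m)*(2*real (Suc m)-1)*Iq m (2*Suc n+1) = 0"
        using R[of "Suc m"] by simp
      show "(2*real n+3)*(2*real n+2)*(fact (2*Suc m)/2*Cn (Suc n)*Sm (Suc m) (Suc n))
        - (2*real n+3)^2 * Iq (Suc m) (2*Suc n+1)
        - (2*real m+2)*(2*real m+1)*(fact (2*m)/2*Cn (Suc (Suc n))*Sm m (Suc (Suc n))) = 0"
        using R1 unfolding I1 I2 rr by (simp only: mult.assoc)
    qed
    then show ?case unfolding Fm_def SmA by (simp add: algebra_simps)
  qed
qed

lemma mainN: "Iq m (2*n+1) = Fm m (Suc n)"
proof (induction n arbitrary: m)
  case 0
  then show ?case using baseN by simp
next
  case (Suc n)
  then show ?case using stepN by blast
qed

theorem lemma3:
  fixes m n :: nat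
  assumes "n \<ge> 1"
  shows "integral {0..pi/2} (\<lambda>x. x ^ (2*m) * cos x ^ (2*n - 1)) =
    fact (2*m) / 2 * (4 ^ n / (real n * real (2*n choose n))) *
    (\<Sum>j=0..m. (-1) ^ j * tstar2 n j / fact (2*m - 2*j) * (pi/2) ^ (2*m - 2*j))"
proof -
  obtain k where k: "n = Suc k" using assms by (cases n) auto
  have "2*n - 1 = 2*k+1" using k by simp
  then show ?thesis using mainN[of m k] unfolding Iq_def Fm_def Cn_def Sm_def k by simp
qed

end
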